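(* Let $\ell,c,d\in\mathbb{N}$ and let $\beta$ be a $(c,d)$-disjointed $\ell$-covering of a graph $G$. Then $\beta$ is $(c,f)$-disjointed, where $f(t):=d\,t^c$ for each $t\in\mathbb{N}$.
   Context: Graphs are finite, simple and undirected. For a set $B\subseteq V(G)$, $N_G(B)$ is the set of vertices of $G$ adjacent to some vertex of $B$ (so $N_G(\emptyset)=\emptyset$). An $\ell$-covering of $G$ is a set $\beta\subseteq 2^{V(G)}$ with $|B|\le \ell$ for all $B\in\beta$ and $\bigcup_{B\in\beta}B=V(G)$. For $c\in\mathbb{N}_0$ and $d\ge 0$, a covering $\beta$ is $(c,d)$-disjointed if for every $c$-tuple $(B_1,\dots,B_c)\in\beta^c$ and every connected component $X$ of $G-(B_1\cup\dots\cup B_c)$ there is $Q\subseteq V(X)$ with $|Q|\le d$ such that for every connected component $Y$ of $X-Q$ there is $i\in\{1,\dots,c\}$ with $V(Y)\cap N_G(B_i')=\emptyset$, where $B_i':=B_i\setminus(B_1\cup\dots\cup B_{i-1})$. For $t\in\mathbb{N}$, $\beta[t]:=\{\bigcup\mathcal{B} : \mathcal{B}\subseteq\beta, |\mathcal{B}|\le t\}$. For $f:\mathbb{N}\to\mathbb{R}^+$, $\beta$ is $(c,f)$-disjointed if $\beta[t]$ is $(c,f(t))$-disjointed for every $t\in\mathbb{N}$. *)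

theory Defs
  imports Complex_Main
begin

definition simple_graph :: "'a set \<Rightarrow> ('a \<Rightarrow> 'a \<Rightarrow> bool) \<Rightarrow> bool" where
  "simple_graph V E \<longleftrightarrow> finite V \<and> (\<forall>x y. E x y \<longrightarrow> E y x) \<and> (\<forall>x. \<not> E x x)
     \<and> (\<forall>x y. E x y \<longrightarrow> x \<in> V \<and> y \<in> V)"

definition nbhd :: "'a set \<Rightarrow> ('a \<Rightarrow> 'a \<Rightarrow> bool) \<Rightarrow> 'a set \<Rightarrow> 'a set" where
  "nbhd V E B = {v \<in> V. \<exists>b\<in>B. E b v}"

definition components :: "('a \<Rightarrow> 'a \<Rightarrow> bool) \<Rightarrow> 'a set \<Rightarrow> 'a set set" where
  "components E S = (\<lambda>x. {y. (\<lambda>u v. E u v \<and> u \<in> S \<and> v \<in> S)\<^sup>*\<^sup>* x y}) ` S"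

definition covering :: "'a set \<Rightarrow> nat \<Rightarrow> 'a set set \<Rightarrow> bool" where
  "covering V l \<beta> \<longleftrightarrow> \<beta> \<subseteq> Pow V \<and> (\<forall>B\<in>\<beta>. card B \<le> l) \<and> \<Union>\<beta> = V"

text \<open>(c,d)-disjointedness; a c-tuple is a function on indices 0..c-1.\<close>
definition disjointed ::
  "'a set \<Rightarrow> ('a \<Rightarrow> 'a \<Rightarrow> bool) \<Rightarrow> nat \<Rightarrow> real \<Rightarrow> 'a set set \<Rightarrow> bool" where
  "disjointed V E c d \<beta> \<longleftrightarrow>
    (\<forall>Bs :: nat \<Rightarrow> 'a set. (\<forall>i<c. Bs i \<in> \<beta>) \<longrightarrow>
      (\<forall>X \<in> components E (V - (\<Union>i<c. Bs i)).
        \<exists>Q \<subseteq> X. real (card Q) \<le> d \<and>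
          (\<forall>Y \<in> components E (X - Q).
             \<exists>i<c. Y \<inter> nbhd V E (Bs i - (\<Union>j<i. Bs j)) = {})))"

definition union_family :: "'a set set \<Rightarrow> nat \<Rightarrow> 'a set set" where
  "union_family \<beta> t = {\<Union>\<B> | \<B>. \<B> \<subseteq> \<beta> \<and> card \<B> \<le> t}"

definition disjointed_fun ::
  "'a set \<Rightarrow> ('a \<Rightarrow> 'a \<Rightarrow> bool) \<Rightarrow> nat \<Rightarrow> (nat \<Rightarrow> real) \<Rightarrow> 'a set set \<Rightarrow> bool" where
  "disjointed_fun V E c f \<beta> \<longleftrightarrow> (\<forall>t\<ge>1. disjointed V E c (f t) (union_family \<beta> t))"

end

theory Submission
  imports Defs "HOL-Library.FuncSet"
begin

lemma comp_mono:
  assumes "S \<subseteq> S'"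
  shows "{y. (\<lambda>u v. E u v \<and> u \<in> S \<and> v \<in> S)\<^sup>*\<^sup>* x y} \<subseteq> {y. (\<lambda>u v. E u v \<and> u \<in> S' \<and> v \<in> S')\<^sup>*\<^sup>* x y}"
proof
  fix y assume "y \<in> {y. (\<lambda>u v. E u v \<and> u \<in> S \<and> v \<in> S)\<^sup>*\<^sup>* x y}"
  then have "(\<lambda>u v. E u v \<and> u \<in> S \<and> v \<in> S)\<^sup>*\<^sup>* x y" by simp
  then show "y \<in> {y. (\<lambda>u v. E u v \<and> u \<in> S' \<and> v \<in> S')\<^sup>*\<^sup>* x y}"
    by (induct rule: rtranclp_induct) (use assms in \<open>auto intro: rtranclp.rtrancl_into_rtrancl\<close>)
qed

lemma nbhd_mono: "A \<subseteq> B \<Longrightarrow> nbhd V E A \<subseteq> nbhd V E B"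
  unfolding nbhd_def by auto

theorem lemma3p3:
  fixes V :: "'a set" and E :: "'a \<Rightarrow> 'a \<Rightarrow> bool" and l c d :: nat and \<beta> :: "'a set set"
  assumes "simple_graph V E"
    and "l \<ge> 1" and "c \<ge> 1" and "d \<ge> 1"
    and "covering V l \<beta>"
    and "disjointed V E c (real d) \<beta>"
  shows "disjointed_fun V E c (\<lambda>t. real d * real t ^ c) \<beta>"
  unfolding disjointed_fun_def
proof (intro allI impI)
  fix t :: nat assume "t \<ge> 1"
  have finV: "finite V" using assms(1) unfolding simple_graph_def by auto
  have bP: "\<beta> \<subseteq> Pow V" using assms(5) unfolding covering_def by auto
  have finb: "finite \<beta>" using finV bP by (meson finite_Pow_iff finite_subset)
  have dis: "\<And>Bs. (\<forall>i<c. Bs i \<in> \<beta>) \<Longrightarrow> (\<forall>X \<in> components E (V - (\<Union>i<c. Bs i)).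
        \<exists>Q \<subseteq> X. real (card Q) \<le> real d \<and>
          (\<forall>Y \<in> components E (X - Q).
             \<exists>i<c. Y \<inter> nbhd V E (Bs i - (\<Union>j<i. Bs j)) = {}))"
    using assms(6) unfolding disjointed_def by blast
  show "disjointed V E c (real d * real t ^ c) (union_family \<beta> t)"
    unfolding disjointed_def
  proof (intro allI impI ballI)
    fix Bs :: "nat \<Rightarrow> 'a set" and X
    assume hBs: "\<forall>i<c. Bs i \<in> union_family \<beta> t"
      and hX: "X \<in> components E (V - (\<Union>i<c. Bs i))"
    have "\<forall>i. \<exists>\<B>. i < c \<longrightarrow> \<B> \<subseteq> \<beta> \<and> card \<B> \<le> t \<and> Bs i = \<Union>\<B>"
      using hBs unfolding union_family_def by blast
    then obtain F where F: "\<And>i. i < c \<Longrightarrow> F i \<subseteq> \<beta> \<and> card (F i) \<le> t \<and> Bs i = \<Union>(F i)"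
      by metis
    define T where "T = PiE {..<c} F"
    have finF: "\<And>i. i < c \<Longrightarrow> finite (F i)" using F finb finite_subset by metis
    have finT: "finite T" unfolding T_def using finF by (intro finite_PiE) auto
    have cardT: "card T \<le> t ^ c"
    proof -
      have "card T = (\<Prod>i<c. card (F i))" unfolding T_def by (simp add: card_PiE)
      also have "\<dots> \<le> (\<Prod>i<c. t)" by (rule prod_mono) (use F in auto)
      finally show ?thesis by simp
    qed
    have Tb: "\<And>\<tau> i. \<tau> \<in> T \<Longrightarrow> i < c \<Longrightarrow> \<tau> i \<in> \<beta>" unfolding T_def using F by blast
    have TB: "\<And>\<tau> i. \<tau> \<in> T \<Longrightarrow> i < c \<Longrightarrow> \<tau> i \<subseteq> Bs i" unfolding T_def using F by blast
    obtain x0 where x0: "x0 \<in> V - (\<Union>i<c. Bs i)"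
      and Xd: "X = {y. (\<lambda>u v. E u v \<and> u \<in> V - (\<Union>i<c. Bs i) \<and> v \<in> V - (\<Union>i<c. Bs i))\<^sup>*\<^sup>* x0 y}"
      using hX unfolding components_def by blast
    define Xt where "Xt \<tau> = {y. (\<lambda>u v. E u v \<and> u \<in> V - (\<Union>i<c. \<tau> i) \<and> v \<in> V - (\<Union>i<c. \<tau> i))\<^sup>*\<^sup>* x0 y}" for \<tau>
    have sub: "\<And>\<tau>. \<tau> \<in> T \<Longrightarrow> V - (\<Union>i<c. Bs i) \<subseteq> V - (\<Union>i<c. \<tau> i)" using TB by blast
    have XXt: "\<And>\<tau>. \<tau> \<in> T \<Longrightarrow> X \<subseteq> Xt \<tau>" unfolding Xd Xt_def by (rule comp_mono, rule sub)
    have XtC: "\<And>\<tau>. \<tau> \<in> T \<Longrightarrow> Xt \<tau> \<in> components E (V - (\<Union>i<c. \<tau> i))"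
      unfolding components_def Xt_def using sub x0 by blast
    have "\<forall>\<tau>\<in>T. \<exists>Q \<subseteq> Xt \<tau>. real (card Q) \<le> real d \<and>
          (\<forall>Y \<in> components E (Xt \<tau> - Q).
             \<exists>i<c. Y \<inter> nbhd V E (\<tau> i - (\<Union>j<i. \<tau> j)) = {})"
    proof
      fix \<tau> assume h: "\<tau> \<in> T"
      have "\<forall>i<c. \<tau> i \<in> \<beta>" using Tb[OF h] by blast
      from dis[OF this] XtC[OF h] show "\<exists>Q \<subseteq> Xt \<tau>. real (card Q) \<le> real d \<and>
          (\<forall>Y \<in> components E (Xt \<tau> - Q).
             \<exists>i<c. Y \<inter> nbhd V E (\<tau> i - (\<Union>j<i. \<tau> j)) = {})" by (rule bspec)
    qed
    then obtain Qf where Qf: "\<And>\<tau>. \<tau> \<in> T \<Longrightarrow> Qf \<tau> \<subseteq> Xt \<tau> \<and> real (card (Qf \<tau>)) \<le> real d \<and>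
          (\<forall>Y \<in> components E (Xt \<tau> - Qf \<tau>).
             \<exists>i<c. Y \<inter> nbhd V E (\<tau> i - (\<Union>j<i. \<tau> j)) = {})"
      by metis
    define Q where "Q = X \<inter> (\<Union>\<tau>\<in>T. Qf \<tau>)"
    have XV: "X \<subseteq> V"
    proof
      fix y assume "y \<in> X"
      then have "(\<lambda>u v. E u v \<and> u \<in> V - (\<Union>i<c. Bs i) \<and> v \<in> V - (\<Union>i<c. Bs i))\<^sup>*\<^sup>* x0 y"
        using Xd by simp
      then show "y \<in> V" by (induct rule: rtranclp_induct) (use x0 in auto)
    qed
    have "card Q \<le> card (\<Union>\<tau>\<in>T. Qf \<tau>)"
    proof (rule card_mono)
      have "(\<Union>\<tau>\<in>T. Qf \<tau>) \<subseteq> V"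
      proof
        fix y assume "y \<in> (\<Union>\<tau>\<in>T. Qf \<tau>)"
        then obtain \<tau> where "\<tau> \<in> T" "y \<in> Xt \<tau>" using Qf by blast
        then have "(\<lambda>u v. E u v \<and> u \<in> V - (\<Union>i<c. \<tau> i) \<and> v \<in> V - (\<Union>i<c. \<tau> i))\<^sup>*\<^sup>* x0 y"
          unfolding Xt_def by simp
        then show "y \<in> V" by (induct rule: rtranclp_induct) (use x0 in auto)
      qed
      then show "finite (\<Union>\<tau>\<in>T. Qf \<tau>)" using finV finite_subset by blast
    qed (auto simp: Q_def)
    also have "\<dots> \<le> (\<Sum>\<tau>\<in>T. card (Qf \<tau>))" by (rule card_UN_le[OF finT])
    also have "\<dots> \<le> (\<Sum>\<tau>\<in>T. d)"
      by (rule sum_mono) (use Qf in force)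
    also have "\<dots> = card T * d" by simp
    also have "\<dots> \<le> t ^ c * d" using cardT by simp
    finally have cQ: "card Q \<le> t ^ c * d" .
    show "\<exists>Q \<subseteq> X. real (card Q) \<le> real d * real t ^ c \<and>
          (\<forall>Y \<in> components E (X - Q).
             \<exists>i<c. Y \<inter> nbhd V E (Bs i - (\<Union>j<i. Bs j)) = {})"
    proof (rule exI[of _ Q], intro conjI ballI)
      show "Q \<subseteq> X" unfolding Q_def by blast
      have "real (card Q) \<le> real (t ^ c * d)" using cQ by linarith
      then show "real (card Q) \<le> real d * real t ^ c" by (simp add: mult.commute)
    next
      fix Y assume hY: "Y \<in> components E (X - Q)"
      obtain y0 where y0: "y0 \<in> X - Q"
        and Yd: "Y = {y. (\<lambda>u v. E u v \<and> u \<in> X - Q \<and> v \<in> X - Q)\<^sup>*\<^sup>* y0 y}"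
        using hY unfolding components_def by blast
      show "\<exists>i<c. Y \<inter> nbhd V E (Bs i - (\<Union>j<i. Bs j)) = {}"
      proof (rule ccontr)
        assume "\<not> ?thesis"
        then have "\<forall>i<c. Y \<inter> nbhd V E (Bs i - (\<Union>j<i. Bs j)) \<noteq> {}" by blast
        then have "\<forall>i. \<exists>A. i < c \<longrightarrow> A \<in> F i \<and> Y \<inter> nbhd V E (A - (\<Union>j<i. Bs j)) \<noteq> {}"
        proof (intro allI)
          fix i assume a: "\<forall>i<c. Y \<inter> nbhd V E (Bs i - (\<Union>j<i. Bs j)) \<noteq> {}"
          show "\<exists>A. i < c \<longrightarrow> A \<in> F i \<and> Y \<inter> nbhd V E (A - (\<Union>j<i. Bs j)) \<noteq> {}"
          proof (cases "i < c")
            case True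
            then obtain v b where v: "v \<in> Y" "v \<in> V" "b \<in> Bs i" "b \<notin> (\<Union>j<i. Bs j)" "E b v"
              using a unfolding nbhd_def by blast
            then obtain A where "A \<in> F i" "b \<in> A" using F[OF True] by blast
            then have "A \<in> F i \<and> Y \<inter> nbhd V E (A - (\<Union>j<i. Bs j)) \<noteq> {}"
              using v unfolding nbhd_def by blast
            then show ?thesis by blast
          qed auto
        qed
        then obtain g where g: "\<And>i. i < c \<Longrightarrow> g i \<in> F i \<and> Y \<inter> nbhd V E (g i - (\<Union>j<i. Bs j)) \<noteq> {}"
          by metis
        define \<tau> where "\<tau> = restrict g {..<c}"
        have \<tau>T: "\<tau> \<in> T" unfolding T_def \<tau>_def using g by auto
        define Y' where "Y' = {y. (\<lambda>u v. E u v \<and> u \<in> Xt \<tau> - Qf \<tau> \<and> v \<in> Xt \<tau> - Qf \<tau>)\<^sup>*\<^sup>* y0 y}"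
        have sub2: "X - Q \<subseteq> Xt \<tau> - Qf \<tau>" using XXt[OF \<tau>T] \<tau>T unfolding Q_def by blast
        have YY': "Y \<subseteq> Y'" unfolding Yd Y'_def by (rule comp_mono, rule sub2)
        have Y'C: "Y' \<in> components E (Xt \<tau> - Qf \<tau>)"
          unfolding components_def Y'_def using sub2 y0 by blast
        obtain i where i: "i < c" "Y' \<inter> nbhd V E (\<tau> i - (\<Union>j<i. \<tau> j)) = {}"
        proof -
          have "\<forall>Y \<in> components E (Xt \<tau> - Qf \<tau>).
             \<exists>i<c. Y \<inter> nbhd V E (\<tau> i - (\<Union>j<i. \<tau> j)) = {}" using Qf[OF \<tau>T] by blast
          from bspec[OF this Y'C] show ?thesis using that by blast
        qed
        have "g i - (\<Union>j<i. Bs j) \<subseteq> \<tau> i - (\<Union>j<i. \<tau> j)"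
        proof -
          have "\<And>j. j < c \<Longrightarrow> g j \<subseteq> Bs j" using TB[OF \<tau>T] unfolding \<tau>_def by auto
          then have "\<And>j. j < i \<Longrightarrow> g j \<subseteq> Bs j" using i(1) by auto
          then show ?thesis using i(1) unfolding \<tau>_def by auto
        qed
        then have "nbhd V E (g i - (\<Union>j<i. Bs j)) \<subseteq> nbhd V E (\<tau> i - (\<Union>j<i. \<tau> j))"
          by (rule nbhd_mono)
        then show False using g[OF i(1)] i(2) YY' by blast
      qed
    qed
  qed
qed

end
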